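(* Let $G=(V,E)$ be a graph, $d=(d(v):v\in V)$ an integer sequence, and $\mathcal{C}\in\mathcal{K}(d)$, and let $e\in E$. If $(G,\mathcal{C})$ has a CAW through $e$, then for every $\mathcal{C}'\in\mathcal{K}(d)$, $(G,\mathcal{C}')$ has a CAW through $e$.
   Context: Graphs are finite, undirected, may have parallel edges but no loops. $\mathcal{K}(d)$ is the set of all colorings $\mathcal{C}:E\to\{R,B\}$ (red/blue) such that the number of red edges incident with $v$ equals $d(v)$ for every $v\in V$. A walk $(v_0,e_1,v_1,\dots,e_m,v_m)$ is a closed alternating walk (CAW) if $v_0=v_m$, $\mathcal{C}(e_j)\ne\mathcal{C}(e_{j+1})$ for $j=1,\dots,m-1$, and $\mathcal{C}(e_m)\ne\mathcal{C}(e_1)$. A CAW is through $e$ if $e$ is one of its edges $e_j$. *)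

theory Defs
  imports Main
begin

text \<open>A finite multigraph without loops: vertex set V, edge set E, and an endpoint
map ends assigning to each edge a set of exactly two distinct vertices of V
(parallel edges = distinct edges with the same endpoints).\<close>
definition multigraph :: "'v set \<Rightarrow> 'e set \<Rightarrow> ('e \<Rightarrow> 'v set) \<Rightarrow> bool" where
  "multigraph V E ends \<longleftrightarrow> finite V \<and> finite E \<and>
     (\<forall>e\<in>E. ends e \<subseteq> V \<and> card (ends e) = 2)"

text \<open>Red/blue colourings E -> {R,B} (values off E are irrelevant).\<close>
datatype colour = R | B

definition K :: "'v set \<Rightarrow> 'e set \<Rightarrow> ('e \<Rightarrow> 'v set) \<Rightarrow> ('v \<Rightarrow> int) \<Rightarrow> ('e \<Rightarrow> colour) set" where
  "K V E ends d = {C. \<forall>v\<in>V. int (card {e\<in>E. v \<in> ends e \<and> C e = R}) = d v}"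

text \<open>A walk (v_0,e_1,v_1,...,e_m,v_m) given by vertex list vs (length m+1) and edge list
es (length m); es ! j is the edge e_{j+1} joining vs ! j and vs ! (j+1).\<close>
definition is_walk :: "'e set \<Rightarrow> ('e \<Rightarrow> 'v set) \<Rightarrow> 'v list \<Rightarrow> 'e list \<Rightarrow> bool" where
  "is_walk E ends vs es \<longleftrightarrow> length vs = length es + 1 \<and>
     (\<forall>j < length es. es ! j \<in> E \<and> ends (es ! j) = {vs ! j, vs ! Suc j})"

definition is_CAW :: "'e set \<Rightarrow> ('e \<Rightarrow> 'v set) \<Rightarrow> ('e \<Rightarrow> colour) \<Rightarrow> 'v list \<Rightarrow> 'e list \<Rightarrow> bool" where
  "is_CAW E ends C vs es \<longleftrightarrow> is_walk E ends vs es \<and> es \<noteq> [] \<and>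
     hd vs = last vs \<and>
     (\<forall>j. Suc j < length es \<longrightarrow> C (es ! j) \<noteq> C (es ! Suc j)) \<and>
     C (last es) \<noteq> C (hd es)"

definition has_CAW_through :: "'e set \<Rightarrow> ('e \<Rightarrow> 'v set) \<Rightarrow> ('e \<Rightarrow> colour) \<Rightarrow> 'e \<Rightarrow> bool" where
  "has_CAW_through E ends C e \<longleftrightarrow> (\<exists>vs es. is_CAW E ends C vs es \<and> e \<in> set es)"

end

theory Submission
  imports Defs
begin

definition stp :: "'e set \<Rightarrow> ('e \<Rightarrow> 'v set) \<Rightarrow> ('e \<Rightarrow> colour) \<Rightarrow> ('v \<times> bool) \<Rightarrow> ('v \<times> bool) \<Rightarrow> bool" where
  "stp E ends C x y \<longleftrightarrow> (\<exists>f\<in>E. \<exists>u v. ends f = {u,v} \<and> x = (u, C f = B) \<and> y = (v, C f \<noteq> B))"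

lemma colour_neq: "(a::colour) \<noteq> b \<longleftrightarrow> (a = B) = (b \<noteq> B)"
  by (cases a; cases b) auto

lemma walk_reach:
  assumes caw: "is_CAW E ends C vs es" and k: "k < length es"
  shows "(stp E ends C)\<^sup>*\<^sup>* (vs ! Suc k, C (es ! k) \<noteq> B) (vs ! k, C (es ! k) = B)"
proof -
  define m where "m = length es"
  define s where "s j = (vs ! j, C (es ! j) = B)" for j
  have W: "is_walk E ends vs es" and ne: "es \<noteq> []" and cl: "hd vs = last vs"
    and alt: "\<And>j. Suc j < length es \<Longrightarrow> C (es ! j) \<noteq> C (es ! Suc j)"
    and lst: "C (last es) \<noteq> C (hd es)"
    using caw unfolding is_CAW_def by auto
  have len: "length vs = m + 1" and wj: "\<And>j. j < m \<Longrightarrow> es ! j \<in> E \<and> ends (es ! j) = {vs ! j, vs ! Suc j}"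
    using W unfolding is_walk_def m_def by auto
  have m0: "m > 0" using ne m_def by auto
  have vne: "vs \<noteq> []" using len by auto
  have vsm: "vs ! m = vs ! 0"
    using cl len vne by (simp add: hd_conv_nth last_conv_nth)
  have "last es = es ! (m - 1)" "hd es = es ! 0" using ne m_def by (simp_all add: last_conv_nth hd_conv_nth)
  then have lastc: "(C (es ! (m - 1)) \<noteq> B) = (C (es ! 0) = B)"
    using lst by (cases "C (es ! (m - 1))"; cases "C (es ! 0)") auto
  have nxt: "(vs ! Suc j, C (es ! j) \<noteq> B) = s (Suc j)" if "Suc j < m" for j
    using alt[of j] that unfolding s_def m_def by (cases "C (es ! j)"; cases "C (es ! Suc j)") auto
  have st: "stp E ends C (s j) (vs ! Suc j, C (es ! j) \<noteq> B)" if "j < m" for j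
    using wj[OF that] unfolding stp_def s_def by blast
  have reach: "(stp E ends C)\<^sup>*\<^sup>* (s i) (s j)" if "i \<le> j" "j < m" for i j
    using that
  proof (induction j)
    case 0 then show ?case by auto
  next
    case (Suc j)
    show ?case
    proof (cases "i = Suc j")
      case True then show ?thesis by auto
    next
      case False
      then have "(stp E ends C)\<^sup>*\<^sup>* (s i) (s j)" using Suc by auto
      moreover have "stp E ends C (s j) (s (Suc j))" using st[of j] nxt[of j] Suc by auto
      ultimately show ?thesis by auto
    qed
  qed
  have bk: "stp E ends C (s (m - 1)) (s 0)"
    using st[of "m - 1"] m0 vsm lastc unfolding s_def by auto
  show ?thesis
  proof (cases "Suc k < m")
    case True
    have "(stp E ends C)\<^sup>*\<^sup>* (s (Suc k)) (s (m - 1))" using reach True by auto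
    also have "(stp E ends C)\<^sup>*\<^sup>* (s (m - 1)) (s 0)" using bk by auto
    also have "(stp E ends C)\<^sup>*\<^sup>* (s 0) (s k)" using reach k m_def by auto
    finally show ?thesis using nxt[OF True] unfolding s_def by simp
  next
    case False
    then have km: "k = m - 1" using k m_def by auto
    have "(vs ! Suc k, C (es ! k) \<noteq> B) = s 0" using km m0 vsm lastc unfolding s_def by auto
    moreover have "(stp E ends C)\<^sup>*\<^sup>* (s 0) (s k)" using reach k m_def by auto
    ultimately show ?thesis unfolding s_def by simp
  qed
qed

lemma reach_walk:
  assumes "(stp E ends C)\<^sup>*\<^sup>* x y"
  shows "\<exists>vs es. is_walk E ends vs es \<and> hd vs = fst x \<and> last vs = fst y \<and>
     (\<forall>j. Suc j < length es \<longrightarrow> C (es ! j) \<noteq> C (es ! Suc j)) \<and> (es = [] \<longrightarrow> x = y) \<and>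
     (es \<noteq> [] \<longrightarrow> (C (hd es) = B) = snd x \<and> (C (last es) \<noteq> B) = snd y)"
  using assms
proof (induction rule: converse_rtranclp_induct)
  case base
  show ?case by (rule exI[of _ "[fst y]"], rule exI[of _ "[]"]) (simp add: is_walk_def)
next
  case (step x z)
  obtain vs es where IH: "is_walk E ends vs es" "hd vs = fst z" "last vs = fst y"
     "\<forall>j. Suc j < length es \<longrightarrow> C (es ! j) \<noteq> C (es ! Suc j)" "es = [] \<longrightarrow> z = y"
     "es \<noteq> [] \<longrightarrow> (C (hd es) = B) = snd z \<and> (C (last es) \<noteq> B) = snd y"
    using step.IH by blast
  obtain f u v where f: "f \<in> E" "ends f = {u,v}" "x = (u, C f = B)" "z = (v, C f \<noteq> B)"
    using step.hyps(1) unfolding stp_def by blast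
  have lv: "length vs = length es + 1" using IH(1) unfolding is_walk_def by auto
  have vs0: "vs ! 0 = v" using IH(2) f(4) lv by (cases vs) auto
  have W: "is_walk E ends (u # vs) (f # es)"
    using IH(1) f vs0 lv unfolding is_walk_def
    by (auto simp: nth_Cons split: nat.splits)
  have A: "\<forall>j. Suc j < length (f # es) \<longrightarrow> C ((f # es) ! j) \<noteq> C ((f # es) ! Suc j)"
  proof (intro allI impI)
    fix j assume j: "Suc j < length (f # es)"
    show "C ((f # es) ! j) \<noteq> C ((f # es) ! Suc j)"
    proof (cases j)
      case 0
      then have "es \<noteq> []" using j by auto
      then have "(C (hd es) = B) = (C f \<noteq> B)" using IH(6) f(4) by auto
      then show ?thesis using 0 \<open>es \<noteq> []\<close> by (cases "C f"; cases "C (es ! 0)") (auto simp add: hd_conv_nth)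
    next
      case (Suc i) then show ?thesis using IH(4) j by auto
    qed
  qed
  have L: "(C (last (f # es)) \<noteq> B) = snd y"
  proof (cases "es = []")
    case True then show ?thesis using IH(5) f(4) by auto
  next
    case False then show ?thesis using IH(6) by auto
  qed
  show ?case
    apply (rule exI[of _ "u # vs"], rule exI[of _ "f # es"])
    using W A L IH(3) f(3) lv by auto
qed

lemma close_caw:
  assumes "e \<in> E" "ends e = {u,v}"
    and "(stp E ends C)\<^sup>*\<^sup>* (v, C e \<noteq> B) (u, C e = B)"
  shows "has_CAW_through E ends C e"
proof -
  obtain vs es where IH: "is_walk E ends vs es" "hd vs = v" "last vs = u"
     "\<forall>j. Suc j < length es \<longrightarrow> C (es ! j) \<noteq> C (es ! Suc j)" "es = [] \<longrightarrow> (v, C e \<noteq> B) = (u, C e = B)"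
     "es \<noteq> [] \<longrightarrow> (C (hd es) = B) = (C e \<noteq> B) \<and> (C (last es) \<noteq> B) = (C e = B)"
    using reach_walk[OF assms(3)] by auto
  have ne: "es \<noteq> []" using IH(5) by auto
  have lv: "length vs = length es + 1" using IH(1) unfolding is_walk_def by auto
  have vs0: "vs ! 0 = v" using IH(2) lv by (cases vs) auto
  have W: "is_walk E ends (u # vs) (e # es)"
    using IH(1) assms vs0 lv unfolding is_walk_def
    by (auto simp: nth_Cons split: nat.splits)
  have A: "\<forall>j. Suc j < length (e # es) \<longrightarrow> C ((e # es) ! j) \<noteq> C ((e # es) ! Suc j)"
  proof (intro allI impI)
    fix j assume j: "Suc j < length (e # es)"
    show "C ((e # es) ! j) \<noteq> C ((e # es) ! Suc j)"
    proof (cases j)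
      case 0
      then show ?thesis using IH(6) ne by (cases "C e"; cases "C (es ! 0)") (auto simp add: hd_conv_nth)
    next
      case (Suc i) then show ?thesis using IH(4) j by auto
    qed
  qed
  have L: "C (last (e # es)) \<noteq> C (hd (e # es))"
    using IH(6) ne by (cases "C e"; cases "C (last es)") auto
  have lst: "last (u # vs) = u" using IH(3) lv by (cases vs) auto
  have "is_CAW E ends C (u # vs) (e # es)"
    unfolding is_CAW_def using W A L lst by auto
  then show ?thesis unfolding has_CAW_through_def by force
qed

lemma sum_sg:
  assumes fin: "finite E" and w: "w \<in> V" and CK: "c \<in> K V E ends d"
  shows "(\<Sum>f\<in>{f\<in>E. w \<in> ends f}. (if c f = R then 1 else -1 :: int))
         = 2 * d w - int (card {f\<in>E. w \<in> ends f})"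
proof -
  let ?A = "{f\<in>E. w \<in> ends f}"
  have finA: "finite ?A" using fin by auto
  have red: "int (card {f\<in>E. w \<in> ends f \<and> c f = R}) = d w" using CK w unfolding K_def by auto
  have "(\<Sum>f\<in>?A. (if c f = R then 1 else -1 :: int)) = (\<Sum>f\<in>?A. 2 * (if c f = R then 1 else 0) - 1)"
    by (rule sum.cong) auto
  also have "\<dots> = 2 * (\<Sum>f\<in>?A. (if c f = R then 1 else 0 :: int)) - int (card ?A)"
    by (simp add: sum_subtractf sum_distrib_left)
  also have "(\<Sum>f\<in>?A. (if c f = R then 1 else 0 :: int)) = int (card {f\<in>?A. c f = R})"
    using finA by (simp add: sum.inter_filter[symmetric])
  also have "{f\<in>?A. c f = R} = {f\<in>E. w \<in> ends f \<and> c f = R}" by auto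
  finally show ?thesis using red by simp
qed

lemma swap_sum:
  fixes g t :: "_ \<Rightarrow> int"
  assumes fin: "finite E" "finite V" and sub: "\<forall>f\<in>E. ends f \<subseteq> V"
  shows "(\<Sum>f\<in>E. g f * (\<Sum>w\<in>ends f. t w)) = (\<Sum>w\<in>V. t w * (\<Sum>f\<in>{f\<in>E. w \<in> ends f}. g f))"
proof -
  have "(\<Sum>f\<in>E. g f * (\<Sum>w\<in>ends f. t w)) = (\<Sum>f\<in>E. \<Sum>w\<in>V. if w \<in> ends f then g f * t w else 0)"
  proof (rule sum.cong)
    fix f assume f: "f \<in> E"
    have "(\<Sum>w\<in>ends f. t w) = (\<Sum>w\<in>V \<inter> ends f. t w)" proof -
      have "V \<inter> ends f = ends f" using sub f by auto
      then show ?thesis by simp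
    qed
    also have "\<dots> = (\<Sum>w\<in>V. if w \<in> ends f then t w else 0)" using fin by (simp add: sum.inter_restrict)
    finally show "g f * (\<Sum>w\<in>ends f. t w) = (\<Sum>w\<in>V. if w \<in> ends f then g f * t w else 0)"
      by (simp add: sum_distrib_left if_distrib cong: if_cong)
  qed simp
  also have "\<dots> = (\<Sum>w\<in>V. \<Sum>f\<in>E. if w \<in> ends f then g f * t w else 0)" by (rule sum.swap)
  also have "\<dots> = (\<Sum>w\<in>V. t w * (\<Sum>f\<in>{f\<in>E. w \<in> ends f}. g f))"
  proof (rule sum.cong)
    fix w assume "w \<in> V"
    show "(\<Sum>f\<in>E. if w \<in> ends f then g f * t w else 0) = t w * (\<Sum>f\<in>{f\<in>E. w \<in> ends f}. g f)"
      using fin by (simp add: sum.inter_filter sum_distrib_left mult.commute if_distrib cong: if_cong)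
  qed simp
  finally show ?thesis .
qed

lemma counting:
  assumes G: "multigraph V E ends" and CK: "C \<in> K V E ends d" and CK': "C' \<in> K V E ends d"
    and cl: "\<And>x y. x \<in> S \<Longrightarrow> stp E ends C' x y \<Longrightarrow> y \<in> S"
    and f: "f \<in> E" "C f \<noteq> C' f" "ends f = {u,v}"
  shows "(u, b) \<in> S \<longleftrightarrow> (v, \<not> b) \<in> S"
proof -
  have finE: "finite E" and finV: "finite V" and sub: "\<forall>f\<in>E. ends f \<subseteq> V"
    and c2: "\<forall>f\<in>E. card (ends f) = 2" using G unfolding multigraph_def by auto
  define ind where "ind z = (if z \<in> S then 1 else 0 :: int)" for z
  define t where "t w = ind (w, True) - ind (w, False)" for w
  define sg where "sg c = (if c = R then 1 else -1 :: int)" for c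
  define phi where "phi c g = sg (c g) * (\<Sum>w\<in>ends g. t w)" for c g
  have Phi: "(\<Sum>g\<in>E. phi c g) = (\<Sum>w\<in>V. t w * (2 * d w - int (card {g\<in>E. w \<in> ends g})))"
    if "c \<in> K V E ends d" for c
  proof -
    have "(\<Sum>g\<in>E. phi c g) = (\<Sum>w\<in>V. t w * (\<Sum>g\<in>{g\<in>E. w \<in> ends g}. sg (c g)))"
      unfolding phi_def by (rule swap_sum[OF finE finV sub])
    also have "\<dots> = (\<Sum>w\<in>V. t w * (2 * d w - int (card {g\<in>E. w \<in> ends g})))"
      using sum_sg[OF finE _ that] unfolding sg_def by (intro sum.cong) auto
    finally show ?thesis .
  qed
  have split: "phi c g = (ind (y, \<not> (c g = B)) - ind (x, c g = B)) + (ind (x, \<not> (c g = B)) - ind (y, c g = B))"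
    if "g \<in> E" "ends g = {x, y}" for c g x y
  proof -
    have "x \<noteq> y" using c2 that by (cases "x = y") auto
    then have "(\<Sum>w\<in>ends g. t w) = t x + t y" using that by simp
    then show ?thesis unfolding phi_def sg_def t_def by (cases "c g") auto
  qed
  have arcnn: "ind (y, \<not> (C' g = B)) - ind (x, C' g = B) \<ge> 0" if "g \<in> E" "ends g = {x, y}" for g x y
  proof -
    have "stp E ends C' (x, C' g = B) (y, \<not> (C' g = B))" unfolding stp_def using that by blast
    then show ?thesis using cl unfolding ind_def by auto
  qed
  have nn: "phi C' g \<ge> 0" if "g \<in> E" for g
  proof -
    have "card (ends g) = 2" using c2 that by auto
    then obtain x y where "ends g = {x, y}" by (auto simp: card_2_iff)
    then show ?thesis using split[OF that] arcnn[OF that] arcnn[OF that, of y x] by (simp add: insert_commute)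
  qed
  have flip: "phi C g = (if C g \<noteq> C' g then - phi C' g else phi C' g)" for g
    unfolding phi_def sg_def by (cases "C g"; cases "C' g") auto
  have "(\<Sum>g\<in>E. phi C g) = (\<Sum>g\<in>E. phi C' g)" using Phi[OF CK] Phi[OF CK'] by simp
  then have "(\<Sum>g\<in>E. phi C g - phi C' g) = 0" by (simp add: sum_subtractf)
  also have "(\<Sum>g\<in>E. phi C g - phi C' g) = (\<Sum>g\<in>E. -2 * (if C g \<noteq> C' g then phi C' g else 0))"
    by (rule sum.cong) (auto simp: flip)
  finally have "(\<Sum>g\<in>E. (if C g \<noteq> C' g then phi C' g else 0)) = 0"
    by (simp add: sum_negf sum_distrib_left[symmetric])
  then have "\<forall>g\<in>E. (if C g \<noteq> C' g then phi C' g else 0) = 0"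
    using finE nn by (subst sum_nonneg_eq_0_iff[symmetric]) auto
  then have z: "phi C' f = 0" using f by auto
  have a1: "ind (v, \<not> (C' f = B)) = ind (u, C' f = B)"
    and a2: "ind (u, \<not> (C' f = B)) = ind (v, C' f = B)"
  proof -
    have fe: "ends f = {v, u}" using f(3) by (simp add: insert_commute)
    have s: "phi C' f = (ind (v, \<not> (C' f = B)) - ind (u, C' f = B)) + (ind (u, \<not> (C' f = B)) - ind (v, C' f = B))"
      by (rule split[OF f(1) f(3)])
    have n1: "ind (v, \<not> (C' f = B)) - ind (u, C' f = B) \<ge> 0" by (rule arcnn[OF f(1) f(3)])
    have n2: "ind (u, \<not> (C' f = B)) - ind (v, C' f = B) \<ge> 0" by (rule arcnn[OF f(1) fe])
    show "ind (v, \<not> (C' f = B)) = ind (u, C' f = B)" using z s n1 n2 by linarith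
    show "ind (u, \<not> (C' f = B)) = ind (v, C' f = B)" using z s n1 n2 by linarith
  qed
  show ?thesis
  proof (cases "b = (C' f = B)")
    case True then show ?thesis using a1 unfolding ind_def by (auto split: if_splits)
  next
    case False then show ?thesis using a2 unfolding ind_def by (auto split: if_splits)
  qed
qed

theorem lemma2p5:
  fixes V :: "'v set" and E :: "'e set" and ends :: "'e \<Rightarrow> 'v set"
    and d :: "'v \<Rightarrow> int" and C C' :: "'e \<Rightarrow> colour" and e :: 'e
  assumes "multigraph V E ends"
    and "C \<in> K V E ends d"
    and "e \<in> E"
    and "has_CAW_through E ends C e"
    and "C' \<in> K V E ends d"
  shows "has_CAW_through E ends C' e"
proof (rule ccontr)
  assume no: "\<not> has_CAW_through E ends C' e"
  obtain vs es where caw: "is_CAW E ends C vs es" and "e \<in> set es"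
    using assms(4) unfolding has_CAW_through_def by auto
  then obtain k where k: "k < length es" "es ! k = e" by (auto simp: in_set_conv_nth)
  define u where "u = vs ! k"
  define v where "v = vs ! Suc k"
  have ends: "ends e = {u, v}" using caw k unfolding is_CAW_def is_walk_def u_def v_def by auto
  have rC: "(stp E ends C)\<^sup>*\<^sup>* (v, C e \<noteq> B) (u, C e = B)"
    using walk_reach[OF caw k(1)] k(2) unfolding u_def v_def by simp
  define S where "S = {z. (stp E ends C')\<^sup>*\<^sup>* (v, C' e \<noteq> B) z}"
  have uS: "(u, C' e = B) \<notin> S" using close_caw[of e E ends u v C'] assms(3) ends no unfolding S_def by auto
  have vS: "(v, C' e \<noteq> B) \<in> S" unfolding S_def by auto
  have cl': "\<And>x y. x \<in> S \<Longrightarrow> stp E ends C' x y \<Longrightarrow> y \<in> S"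
    unfolding S_def by (auto intro: rtranclp.rtrancl_into_rtrancl)
  have cnt: "(p, b) \<in> S \<longleftrightarrow> (q, \<not> b) \<in> S" if "f \<in> E" "C f \<noteq> C' f" "ends f = {p,q}" for f p q b
    using counting[OF assms(1) assms(2) assms(5) cl' that] .
  have cl: "y \<in> S" if xS: "x \<in> S" and xy: "stp E ends C x y" for x y
  proof -
    obtain f p q where f: "f \<in> E" "ends f = {p,q}" "x = (p, C f = B)" "y = (q, C f \<noteq> B)"
      using xy unfolding stp_def by blast
    show ?thesis
    proof (cases "C f = C' f")
      case True
      then have "stp E ends C' x y" using f unfolding stp_def by auto
      then show ?thesis using cl' xS by blast
    next
      case False
      then show ?thesis using cnt[OF f(1) False f(2), of "C f = B"] f xS by auto
    qed
  qed
  show False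
  proof (cases "C e = C' e")
    case True
    have "(stp E ends C)\<^sup>*\<^sup>* a z \<Longrightarrow> a \<in> S \<Longrightarrow> z \<in> S" for a z
      by (induction rule: rtranclp_induct) (auto intro: cl)
    then show False using rC vS uS True by auto
  next
    case False
    show False using cnt[OF assms(3) False ends, of "C' e = B"] vS uS by auto
  qed
qed

end
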